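(* Let $t\in\mathbb{R}$, $\mu>0$, $\sigma>0$, $\lambda>0$ with $\lambda\ge(\mu-t)_-$. Let $\mathcal{L}_{\lambda}(\mu,\sigma)$ be the set of probability distributions $F$ on $\mathbb{R}$ with $\mathbb{E}^F[X]=\mu$, $\mathbb{E}^F[X^2]=\mu^2+\sigma^2$ and $\mathbb{E}^F[(X-t)_-]\le\lambda$ (for $X\sim F$), and let $\mathcal{L}^+_{\lambda}(\mu,\sigma)=\{F\in\mathcal{L}_{\lambda}(\mu,\sigma): F(0-)=0\}$. If either $\lambda>(\mu-t)_-$, or $\lambda=(\mu-t)_-$ and $\sigma^2\le\mu(t-\mu)$, then \[ \sup_{F \in \mathcal{L}^+_{\lambda}(\mu, \sigma)} \mathbb{E}^{F}[(X-t)_{+}^2] = \sup_{F \in \mathcal{L}_{\lambda}(\mu, \sigma)} \mathbb{E}^{F}[(X-t)_{+}^2] = \begin{cases} \sigma^2 + (\mu-t)_+^2, & \lambda > (\mu-t)_-, \\ 0, & \lambda=(\mu-t)_-,~\sigma^2 \le \mu (t-\mu). \end{cases} \]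
   Context: For $x\in\mathbb{R}$, $(x)_+=\max\{x,0\}$ and $(x)_-=\max\{-x,0\}$. $F(0-)=\mathbb{P}(X<0)$ under $F$, so $F(0-)=0$ means $F$ is the distribution of a non-negative random variable. $\mathbb{E}^F$ denotes expectation when $X$ has distribution $F$. *)

theory Defs
  imports "HOL-Probability.Probability"
begin

definition pos_part :: "real \<Rightarrow> real" where
  "pos_part x = max x 0"

definition neg_part :: "real \<Rightarrow> real" where
  "neg_part x = max (- x) 0"

definition Lset :: "real \<Rightarrow> real \<Rightarrow> real \<Rightarrow> real \<Rightarrow> real measure set" where
  "Lset t mu sig lam = {F. prob_space F \<and> sets F = sets borel \<and>
      integrable F (\<lambda>x. x) \<and> integrable F (\<lambda>x. x ^ 2) \<and>
      (\<integral>x. x \<partial>F) = mu \<and> (\<integral>x. x ^ 2 \<partial>F) = mu ^ 2 + sig ^ 2 \<and>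
      (\<integral>x. neg_part (x - t) \<partial>F) \<le> lam}"

definition Lset_plus :: "real \<Rightarrow> real \<Rightarrow> real \<Rightarrow> real \<Rightarrow> real measure set" where
  "Lset_plus t mu sig lam = {F \<in> Lset t mu sig lam. measure F {..<0} = 0}"

end

theory Submission
  imports Defs "HOL-Real_Asymp.Real_Asymp"
begin

definition twopt :: "real \<Rightarrow> real \<Rightarrow> real \<Rightarrow> real measure" where
  "twopt p B A = distr (measure_pmf (bernoulli_pmf p)) borel (\<lambda>b. if b then B else A)"

lemma twopt_basic:
  assumes "0 \<le> p" "p \<le> 1"
  shows "prob_space (twopt p B A)" "sets (twopt p B A) = sets borel"
proof -
  show "prob_space (twopt p B A)" unfolding twopt_def
    by (rule prob_space.prob_space_distr) (auto simp: measure_pmf.prob_space_axioms)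
  show "sets (twopt p B A) = sets borel" unfolding twopt_def by simp
qed

lemma twopt_int:
  assumes "0 \<le> p" "p \<le> 1" and g: "g \<in> borel_measurable borel"
  shows "integrable (twopt p B A) g" "integral\<^sup>L (twopt p B A) g = p * g B + (1 - p) * g A"
proof -
  have m: "(\<lambda>b. if b then B else A) \<in> measurable (measure_pmf (bernoulli_pmf p)) borel" by simp
  show "integrable (twopt p B A) g" unfolding twopt_def
    by (subst integrable_distr_eq[OF m g]) (rule integrable_measure_pmf_finite, simp)
  show "integral\<^sup>L (twopt p B A) g = p * g B + (1 - p) * g A" unfolding twopt_def
    using assms by (subst integral_distr[OF m g]) simp
qed

lemma twopt_neg:
  assumes "0 \<le> p" "p \<le> 1" "0 \<le> A" "0 \<le> B"
  shows "measure (twopt p B A) {..<0} = 0"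
proof -
  interpret prob_space "twopt p B A" using twopt_basic[OF assms(1,2)] by simp
  have "measure (twopt p B A) {..<0} = integral\<^sup>L (twopt p B A) (indicator {..<0})"
    by (simp add: twopt_basic[OF assms(1,2)] cong: sets_eq_imp_space_eq)
  also have "\<dots> = 0" using assms by (subst twopt_int) auto
  finally show ?thesis .
qed


lemma meas_F: assumes "sets F = sets borel" "f \<in> borel_measurable borel"
  shows "f \<in> borel_measurable F"
  using assms measurable_cong_sets by blast

lemma pos_meas: "(\<lambda>x. pos_part (x - t)) \<in> borel_measurable borel"
  unfolding pos_part_def by measurable
lemma neg_meas: "(\<lambda>x. neg_part (x - t)) \<in> borel_measurable borel"
  unfolding pos_part_def neg_part_def by measurable

lemma upper:
  assumes F: "F \<in> Lset t mu sig lam"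
  shows "(\<integral>x. (pos_part (x - t)) ^ 2 \<partial>F) \<le> sig ^ 2 + (pos_part (mu - t)) ^ 2"
proof -
  from F have ps: "prob_space F" and sF: "sets F = sets borel" and i1: "integrable F (\<lambda>x. x)"
    and i2: "integrable F (\<lambda>x. x ^ 2)" and e1: "(\<integral>x. x \<partial>F) = mu"
    and e2: "(\<integral>x. x ^ 2 \<partial>F) = mu ^ 2 + sig ^ 2" unfolding Lset_def by auto
  interpret prob_space F by (rule ps)
  define c where "c = neg_part (mu - t)"
  have c0: "c \<ge> 0" unfolding c_def neg_part_def by simp
  have eq: "\<And>x. (x - t + c)^2 = x^2 + (2*(c-t))*x + (c-t)^2" by (simp add: power2_eq_square algebra_simps)
  have iq: "integrable F (\<lambda>x. (x - t + c)^2)"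
    unfolding eq using i1 i2 by (intro Bochner_Integration.integrable_add integrable_mult_right) auto
  have Iq: "(\<integral>x. (x - t + c)^2 \<partial>F) = sig ^ 2 + (pos_part (mu - t)) ^ 2"
  proof -
    have a: "integrable F (\<lambda>x. x^2 + (2*(c-t))*x)" using i1 i2 by auto
    have "(\<integral>x. (x - t + c)^2 \<partial>F) = (\<integral>x. x^2 + (2*(c-t))*x \<partial>F) + (\<integral>x. (c-t)^2 \<partial>F)"
      unfolding eq by (rule Bochner_Integration.integral_add[OF a]) simp
    also have "(\<integral>x. x^2 + (2*(c-t))*x \<partial>F) = (\<integral>x. x^2 \<partial>F) + (\<integral>x. (2*(c-t))*x \<partial>F)"
      by (rule Bochner_Integration.integral_add) (use i1 i2 in auto)
    also have "(\<integral>x. (2*(c-t))*x \<partial>F) = (2*(c-t))*mu" using e1 by simp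
    also have "(\<integral>x. (c-t)^2 \<partial>F) = (c-t)^2" by (simp add: prob_space)
    finally have "(\<integral>x. (x - t + c)^2 \<partial>F) = (mu^2 + sig^2) + (2*(c-t))*mu + (c-t)^2" using e2 by simp
    also have "\<dots> = sig ^ 2 + (mu + c - t)^2" by (simp add: power2_eq_square algebra_simps)
    also have "mu + c - t = pos_part (mu - t)" unfolding c_def pos_part_def neg_part_def by auto
    finally show ?thesis .
  qed
  have pw: "(pos_part (x - t)) ^ 2 \<le> (x - t + c)^2" for x
  proof (cases "x \<ge> t")
    case True then show ?thesis using c0 unfolding pos_part_def by (auto intro!: power_mono)
  qed (simp add: pos_part_def)
  have ip: "integrable F (\<lambda>x. (pos_part (x - t)) ^ 2)"
  proof (rule Bochner_Integration.integrable_bound[OF iq])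
    show "(\<lambda>x. (pos_part (x - t))\<^sup>2) \<in> borel_measurable F"
      by (rule meas_F[OF sF]) (intro borel_measurable_power pos_meas)
    show "AE x in F. norm ((pos_part (x - t))\<^sup>2) \<le> norm ((x - t + c)\<^sup>2)"
      using pw by (auto simp: pos_part_def)
  qed
  have "(\<integral>x. (pos_part (x - t)) ^ 2 \<partial>F) \<le> (\<integral>x. (x - t + c)^2 \<partial>F)"
    by (rule integral_mono[OF ip iq pw])
  with Iq show ?thesis by simp
qed

lemma upper0:
  assumes F: "F \<in> Lset t mu sig lam" and lt: "lam = neg_part (mu - t)" "mu < t"
  shows "(\<integral>x. (pos_part (x - t)) ^ 2 \<partial>F) = 0"
proof -
  from F have ps: "prob_space F" and sF: "sets F = sets borel" and i1: "integrable F (\<lambda>x. x)"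
    and e1: "(\<integral>x. x \<partial>F) = mu" and en: "(\<integral>x. neg_part (x - t) \<partial>F) \<le> lam"
    unfolding Lset_def by auto
  interpret prob_space F by (rule ps)
  have ib: "integrable F (\<lambda>x. \<bar>x\<bar> + \<bar>t\<bar>)" using i1 by auto
  have ineg: "integrable F (\<lambda>x. neg_part (x - t))"
  proof (rule Bochner_Integration.integrable_bound[OF ib])
    show "(\<lambda>x. neg_part (x - t)) \<in> borel_measurable F" by (rule meas_F[OF sF neg_meas])
    show "AE x in F. norm (neg_part (x - t)) \<le> norm (\<bar>x\<bar> + \<bar>t\<bar>)"
      by (auto simp: neg_part_def)
  qed
  have peq: "\<And>x. pos_part (x - t) = (x - t) + neg_part (x - t)"
    unfolding pos_part_def neg_part_def by auto
  have ipos: "integrable F (\<lambda>x. pos_part (x - t))" unfolding peq using i1 ineg by auto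
  have "(\<integral>x. pos_part (x - t) \<partial>F) = (\<integral>x. (x - t) \<partial>F) + (\<integral>x. neg_part (x - t) \<partial>F)"
    unfolding peq using i1 ineg by (subst Bochner_Integration.integral_add) auto
  also have "(\<integral>x. (x - t) \<partial>F) = mu - t" using i1 e1 by (subst Bochner_Integration.integral_diff) (auto simp: prob_space)
  finally have "(\<integral>x. pos_part (x - t) \<partial>F) \<le> 0" using en lt by (simp add: neg_part_def)
  moreover have "(\<integral>x. pos_part (x - t) \<partial>F) \<ge> 0" by (rule integral_nonneg_AE) (simp add: pos_part_def)
  ultimately have "(\<integral>x. pos_part (x - t) \<partial>F) = 0" by simp
  then have "AE x in F. pos_part (x - t) = 0"
    using integral_nonneg_eq_0_iff_AE[OF ipos] by (simp add: pos_part_def)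
  then have "AE x in F. (pos_part (x - t))^2 = 0" by auto
  then have "(\<integral>x. (pos_part (x - t)) ^ 2 \<partial>F) = (\<integral>x. 0 \<partial>F)" by (intro integral_cong_AE meas_F[OF sF] borel_measurable_power pos_meas) auto
  then show ?thesis by simp
qed


lemma alg1: fixes x s mu :: real assumes "x>0" "s>0"
  shows "s/(x*x+s)*(mu+x) + x*x/(x*x+s)*(mu - s/x) = mu"
proof -
  have d: "x*x+s > 0" using assms by (simp add: add_pos_pos)
  have e: "x*x*(mu - s/x) = x*x*mu - s*x" using assms by (simp add: field_simps)
  have "s/(x*x+s)*(mu+x) + x*x/(x*x+s)*(mu - s/x) = (s*(mu+x) + x*x*(mu - s/x))/(x*x+s)"
    by (simp add: add_divide_distrib)
  also have "\<dots> = mu*(x*x+s)/(x*x+s)" unfolding e by (simp add: algebra_simps)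
  finally show ?thesis using d by simp
qed
lemma alg2: fixes x s mu :: real assumes "x>0" "s>0"
  shows "s/(x*x+s)*(mu+x)^2 + x*x/(x*x+s)*(mu - s/x)^2 = mu^2 + s"
proof -
  have d: "x*x+s > 0" using assms by (simp add: add_pos_pos)
  have e: "x*x*(mu - s/x)^2 = x * x * mu * mu - 2 * s * x * mu + s * s" using assms by (simp add: field_simps power2_eq_square)
  have "s/(x*x+s)*(mu+x)^2 + x*x/(x*x+s)*(mu - s/x)^2 = (s*(mu+x)^2 + x*x*(mu - s/x)^2)/(x*x+s)"
    by (simp add: add_divide_distrib)
  also have "\<dots> = (mu^2+s)*(x*x+s)/(x*x+s)" unfolding e by (simp add: algebra_simps power2_eq_square)
  finally show ?thesis using d by simp
qed

lemma pB_in_Lset_plus: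
  assumes p: "0 \<le> p" "p \<le> 1" and AB: "0 \<le> A" "0 \<le> B"
    and m1: "p * B + (1 - p) * A = mu" and m2: "p * B^2 + (1 - p) * A^2 = mu^2 + sig^2"
    and nn: "p * neg_part (B - t) + (1 - p) * neg_part (A - t) \<le> lam"
  shows "twopt p B A \<in> Lset_plus t mu sig lam"
    and "(\<integral>x. (pos_part (x - t)) ^ 2 \<partial>twopt p B A) = p * (pos_part (B - t))^2 + (1 - p) * (pos_part (A - t))^2"
proof -
  have mx: "(\<lambda>x::real. x) \<in> borel_measurable borel" "(\<lambda>x::real. x^2) \<in> borel_measurable borel" by auto
  show "twopt p B A \<in> Lset_plus t mu sig lam"
    unfolding Lset_plus_def Lset_def using twopt_basic[OF p] twopt_int[OF p mx(1)] twopt_int[OF p mx(2)]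
      twopt_int[OF p neg_meas] twopt_neg[OF p AB] m1 m2 nn by auto
  show "(\<integral>x. (pos_part (x - t)) ^ 2 \<partial>twopt p B A) = p * (pos_part (B - t))^2 + (1 - p) * (pos_part (A - t))^2"
    using twopt_int[OF p borel_measurable_power[OF pos_meas]] by simp
qed

theorem corollary1:
  fixes t mu sig lam :: real
  assumes "mu > 0" and "sig > 0" and "lam > 0" and "lam \<ge> neg_part (mu - t)"
    and "lam > neg_part (mu - t) \<or> (lam = neg_part (mu - t) \<and> sig ^ 2 \<le> mu * (t - mu))"
  shows "(SUP F \<in> Lset_plus t mu sig lam. ereal (\<integral>x. (pos_part (x - t)) ^ 2 \<partial>F))
           = (SUP F \<in> Lset t mu sig lam. ereal (\<integral>x. (pos_part (x - t)) ^ 2 \<partial>F))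
       \<and> (SUP F \<in> Lset t mu sig lam. ereal (\<integral>x. (pos_part (x - t)) ^ 2 \<partial>F))
           = ereal (if lam > neg_part (mu - t) then sig ^ 2 + (pos_part (mu - t)) ^ 2 else 0)"
proof -
  define V where "V F = ereal (\<integral>x. (pos_part (x - t)) ^ 2 \<partial>F)" for F
  define T where "T = (if lam > neg_part (mu - t) then sig ^ 2 + (pos_part (mu - t)) ^ 2 else 0)"
  have le1: "(SUP F \<in> Lset_plus t mu sig lam. V F) \<le> (SUP F \<in> Lset t mu sig lam. V F)"
    by (rule SUP_subset_mono) (auto simp: Lset_plus_def)
  have le2: "(SUP F \<in> Lset t mu sig lam. V F) \<le> ereal T"
  proof (rule SUP_least)
    fix F assume F: "F \<in> Lset t mu sig lam"
    show "V F \<le> ereal T"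
    proof (cases "lam > neg_part (mu - t)")
      case True then show ?thesis using upper[OF F] by (simp add: V_def T_def)
    next
      case False
      with assms have eq: "lam = neg_part (mu - t)" by auto
      with assms have "mu < t" by (auto simp: neg_part_def)
      then show ?thesis using upper0[OF F eq] False by (simp add: V_def T_def)
    qed
  qed
  have le3: "ereal T \<le> (SUP F \<in> Lset_plus t mu sig lam. V F)"
  proof (cases "lam > neg_part (mu - t)")
    case False
    with assms have eq: "lam = neg_part (mu - t)" and ss: "sig ^ 2 \<le> mu * (t - mu)" by auto
    with assms have mt: "mu < t" by (auto simp: neg_part_def)
    define b where "b = mu + sig^2 / mu"
    have bpos: "b > mu" using assms by (simp add: b_def)
    have bt: "b \<le> t" using ss assms by (simp add: b_def field_simps)
    define p where "p = mu / b"
    have p: "0 \<le> p" "p \<le> 1" using bpos assms by (auto simp: p_def)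
    have 1: "p * b + (1 - p) * 0 = mu" using bpos assms by (simp add: p_def)
    have 2: "p * b^2 + (1 - p) * 0^2 = mu^2 + sig^2"
    proof -
      have "p * b^2 = mu * b" using bpos assms(1) by (simp add: p_def power2_eq_square)
      also have "\<dots> = mu^2 + sig^2" using assms(1) by (simp add: b_def field_simps power2_eq_square)
      finally show ?thesis by simp
    qed
    have 3: "p * neg_part (b - t) + (1 - p) * neg_part (0 - t) \<le> lam"
    proof -
      have "p * neg_part (b - t) + (1 - p) * neg_part (0 - t) = p * (t - b) + (1 - p) * t"
        using bt mt assms by (simp add: neg_part_def)
      also have "\<dots> = t - mu" using 1 by (simp add: algebra_simps)
      finally show ?thesis using eq mt by (simp add: neg_part_def)
    qed
    have "twopt p b 0 \<in> Lset_plus t mu sig lam" "V (twopt p b 0) = 0"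
      using pB_in_Lset_plus[OF p _ _ 1 2 3] bpos assms bt mt
      by (auto simp: V_def pos_part_def)
    then show ?thesis using False by (auto simp: T_def intro!: SUP_upper2)
  next
    case True
    define s where "s = sig^2"
    have s0: "s > 0" using assms by (simp add: s_def)
    define N where "N n = real n + 1" for n
    define B where "B n = mu + N n" for n
    define A where "A n = mu - s / N n" for n
    define p where "p n = s / ((N n)^2 + s)" for n
    have N0: "N n > 0" for n by (simp add: N_def)
    have p: "0 \<le> p n" "p n \<le> 1" for n
    proof -
      have d: "(N n)^2 + s > 0" using s0 by (simp add: add_nonneg_pos)
      show "0 \<le> p n" "p n \<le> 1" using s0 d by (auto simp: p_def divide_le_eq_1)
    qed
    have dp: "N n * N n + s > 0" "s + N n * N n > 0" for n using N0[of n] s0 by (auto intro: add_pos_pos)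
    have pA: "1 - p n = N n * N n / (N n * N n + s)" for n using dp[of n] by (simp add: p_def field_simps power2_eq_square)
    have p': "p n = s / (N n * N n + s)" for n by (simp add: p_def power2_eq_square)
    have m1: "p n * B n + (1 - p n) * A n = mu" for n
      unfolding pA unfolding p' A_def B_def using alg1[OF N0 s0] by simp
    have m2: "p n * (B n)^2 + (1 - p n) * (A n)^2 = mu^2 + sig^2" for n
      unfolding pA unfolding p' A_def B_def using alg2[OF N0 s0] by (simp add: s_def)
    have pl: "p \<longlonglongrightarrow> 0" unfolding p_def N_def by real_asymp
    have Al: "A \<longlonglongrightarrow> mu" unfolding A_def N_def by real_asymp
    have Bev: "eventually (\<lambda>n. B n > t) sequentially" unfolding B_def N_def by real_asymp
    have Aev: "eventually (\<lambda>n. A n > 0) sequentially" using order_tendstoD(1)[OF Al assms(1)] .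
    have negl: "(\<lambda>n. p n * neg_part (B n - t) + (1 - p n) * neg_part (A n - t)) \<longlonglongrightarrow> neg_part (mu - t)"
    proof -
      have "(\<lambda>n. (1 - p n) * neg_part (A n - t)) \<longlonglongrightarrow> (1 - 0) * neg_part (mu - t)"
        unfolding neg_part_def by (intro tendsto_intros pl Al)
      moreover have "eventually (\<lambda>n. (1 - p n) * neg_part (A n - t) = p n * neg_part (B n - t) + (1 - p n) * neg_part (A n - t)) sequentially"
        using Bev by eventually_elim (simp add: neg_part_def)
      ultimately show ?thesis by (simp add: Lim_transform_eventually)
    qed
    have Nev: "eventually (\<lambda>n. p n * neg_part (B n - t) + (1 - p n) * neg_part (A n - t) < lam) sequentially"
      using order_tendstoD(2)[OF negl True] .
    have vl: "(\<lambda>n. p n * (pos_part (B n - t))^2 + (1 - p n) * (pos_part (A n - t))^2) \<longlonglongrightarrow> T"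
    proof -
      have l1: "(\<lambda>n. s * (mu + (real n + 1) - t)^2 / ((real n + 1)^2 + s)) \<longlonglongrightarrow> s" by real_asymp
      have l2: "(\<lambda>n. (1 - p n) * (pos_part (A n - t))^2) \<longlonglongrightarrow> (1 - 0) * (pos_part (mu - t))^2"
        unfolding pos_part_def by (intro tendsto_intros pl Al)
      have "(\<lambda>n. s * (mu + (real n + 1) - t)^2 / ((real n + 1)^2 + s) + (1 - p n) * (pos_part (A n - t))^2) \<longlonglongrightarrow> s + (1 - 0) * (pos_part (mu - t))^2"
        by (intro tendsto_add l1 l2)
      moreover have "eventually (\<lambda>n. s * (mu + (real n + 1) - t)^2 / ((real n + 1)^2 + s) + (1 - p n) * (pos_part (A n - t))^2 = p n * (pos_part (B n - t))^2 + (1 - p n) * (pos_part (A n - t))^2) sequentially"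
        using Bev by eventually_elim (simp add: pos_part_def p_def B_def N_def)
      ultimately show ?thesis using True by (simp add: Lim_transform_eventually T_def s_def)
    qed
    have ev: "eventually (\<lambda>n. ereal (p n * (pos_part (B n - t))^2 + (1 - p n) * (pos_part (A n - t))^2) \<le> (SUP F \<in> Lset_plus t mu sig lam. V F)) sequentially"
      using Aev Nev
    proof eventually_elim
      case (elim n)
      have AB: "0 \<le> A n" "0 \<le> B n" using elim assms N0[of n] by (auto simp: B_def)
      note q = pB_in_Lset_plus[OF p[of n] AB m1 m2 less_imp_le[OF elim(2)]]
      show ?case using q by (auto simp: V_def intro!: SUP_upper2[OF q(1)])
    qed
    show ?thesis
      by (rule tendsto_le[OF trivial_limit_sequentially tendsto_const _ ev]) (simp add: vl)
  qed
  from le1 le2 le3 show ?thesis unfolding V_def[symmetric] T_def[symmetric] by (metis order_antisym order_trans)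
qed

end
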